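(* Let $(f,g),(f',g')\in\Theta$ both be $\tau$-lower bounded for some $\tau>0$. Then $$d_{\mathrm{logit}}^2(p_{f,g},p_{f',g'})\le 2|\log\tau|\;\mathcal L^1_{\mathrm{logit}}(p_{f,g},p_{f',g'}),\qquad\text{where }\ \mathcal L^1_{\mathrm{logit}}(p_{f,g},p_{f',g'})=\mathbb E_{x\sim p_x}\|u(x)-u'(x)\|_1.$$
   Context: Model class $\Theta$: pairs $(f,g)$, $f:\mathcal X\to\mathbb R^m$, $g:\mathcal Y\to\mathbb R^m$, $\mathcal Y$ finite with $k$ labels, $\sum_y g(y)=0$, inducing $p_{f,g}(y\mid x)\propto\exp(f(x)^\top g(y))$; $p_x$ is the data distribution. Logits $u(x)=(f(x)^\top g(y))_{y\in\mathcal Y}$; $d_{\mathrm{logit}}^2=\mathbb E_{x\sim p_x}\|u(x)-u'(x)\|_2^2$. $\tau$-lower bounded: $\min_y p_{f,g}(y\mid x)\ge\tau$ for $p_x$-a.e. $x$. (The two models may have different representation dimensions.) *)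

theory Defs
  imports "HOL-Probability.Probability"
begin

(* Label set Y = the finite type 'y; representations f : X -> R^m, g : Y -> R^m,
   with R^m = real^'m (dimension CARD('m)). *)

definition in_Theta :: "('x \<Rightarrow> real^'m) \<Rightarrow> ('y::finite \<Rightarrow> real^'m) \<Rightarrow> bool" where
  "in_Theta f g \<longleftrightarrow> (\<Sum>y\<in>UNIV. g y) = 0"

definition logits :: "('x \<Rightarrow> real^'m) \<Rightarrow> ('y::finite \<Rightarrow> real^'m) \<Rightarrow> 'x \<Rightarrow> 'y \<Rightarrow> real" where
  "logits f g x y = f x \<bullet> g y"

definition cond_prob :: "('x \<Rightarrow> real^'m) \<Rightarrow> ('y::finite \<Rightarrow> real^'m) \<Rightarrow> 'x \<Rightarrow> 'y \<Rightarrow> real" where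
  "cond_prob f g x y = exp (f x \<bullet> g y) / (\<Sum>y'\<in>UNIV. exp (f x \<bullet> g y'))"

definition tau_lower_bounded :: "'x measure \<Rightarrow> real \<Rightarrow> ('x \<Rightarrow> real^'m) \<Rightarrow> ('y::finite \<Rightarrow> real^'m) \<Rightarrow> bool" where
  "tau_lower_bounded M \<tau> f g \<longleftrightarrow> (AE x in M. Min (range (cond_prob f g x)) \<ge> \<tau>)"

definition d_logit_sq :: "'x measure \<Rightarrow> ('x \<Rightarrow> 'y::finite \<Rightarrow> real) \<Rightarrow> ('x \<Rightarrow> 'y \<Rightarrow> real) \<Rightarrow> real" where
  "d_logit_sq M u u' = (\<integral>x. (\<Sum>y\<in>UNIV. (u x y - u' x y)\<^sup>2) \<partial>M)"

definition L1_logit :: "'x measure \<Rightarrow> ('x \<Rightarrow> 'y::finite \<Rightarrow> real) \<Rightarrow> ('x \<Rightarrow> 'y \<Rightarrow> real) \<Rightarrow> real" where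
  "L1_logit M u u' = (\<integral>x. (\<Sum>y\<in>UNIV. \<bar>u x y - u' x y\<bar>) \<partial>M)"

end

theory Submission
  imports Defs
begin

lemma logit_bound:
  fixes u :: "'y::finite \<Rightarrow> real"
  assumes sum0: "(\<Sum>y\<in>UNIV. u y) = 0" and tp: "\<tau> > 0"
    and lb: "\<And>y. \<tau> \<le> exp (u y) / (\<Sum>y'\<in>UNIV. exp (u y'))"
  shows "\<bar>u y\<bar> \<le> - ln \<tau>"
proof -
  define S where "S = (\<Sum>y'\<in>UNIV. exp (u y'))"
  have Spos: "S > 0" unfolding S_def
    by (intro sum_pos) auto
  have le1: "exp (u z) \<le> S" for z unfolding S_def
    by (rule member_le_sum) auto
  have lnp: "ln (exp (u z) / S) = u z - ln S" for z
    using Spos by (simp add: ln_div)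
  have A: "ln \<tau> \<le> u z - ln S" for z
  proof -
    have "ln \<tau> \<le> ln (exp (u z) / S)" using lb[of z] tp Spos unfolding S_def[symmetric]
      by (subst ln_le_cancel_iff) auto
    then show ?thesis using lnp by simp
  qed
  have B: "u z - ln S \<le> 0" for z
  proof -
    have "exp (u z) / S \<le> 1" using le1[of z] Spos by simp
    hence "ln (exp (u z) / S) \<le> 0" using Spos by (simp add: ln_le_zero_iff)
    then show ?thesis using lnp by simp
  qed
  have sA: "(\<Sum>z\<in>(UNIV::'y set). ln \<tau>) \<le> (\<Sum>z\<in>UNIV. u z - ln S)"
    using A by (intro sum_mono) auto
  have sB: "(\<Sum>z\<in>UNIV. u z - ln S) \<le> (\<Sum>z\<in>(UNIV::'y set). (0::real))"
    using B by (intro sum_mono) auto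
  have cpos: "real CARD('y) > 0" by simp
  have e: "(\<Sum>z\<in>UNIV. u z - ln S) = - real CARD('y) * ln S"
    by (simp add: sum_subtractf sum0)
  have "real CARD('y) * ln \<tau> \<le> real CARD('y) * (- ln S)" using sA e by simp
  hence c1: "ln \<tau> \<le> - ln S" using cpos mult_le_cancel_left_pos by blast
  have "real CARD('y) * (- ln S) \<le> real CARD('y) * 0" using sB e by simp
  hence c2: "0 \<le> ln S" using cpos by (simp add: zero_le_mult_iff)
  show ?thesis using A[of y] B[of y] c1 c2 by linarith
qed

lemma logit_bound2:
  fixes f :: "'x \<Rightarrow> real^'m" and g :: "'y::finite \<Rightarrow> real^'m"
  assumes "in_Theta f g" "\<tau> > 0" "Min (range (cond_prob f g x)) \<ge> \<tau>"
  shows "\<bar>logits f g x y\<bar> \<le> - ln \<tau>"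
proof (rule logit_bound)
  show "(\<Sum>y\<in>UNIV. logits f g x y) = 0"
    using assms(1) unfolding in_Theta_def logits_def
    by (simp add: inner_sum_right[symmetric])
  show "\<tau> > 0" by fact
  fix z
  have "Min (range (cond_prob f g x)) \<le> cond_prob f g x z"
    by (rule Min_le) auto
  then show "\<tau> \<le> exp (logits f g x z) / (\<Sum>y'\<in>UNIV. exp (logits f g x y'))"
    using assms(3) unfolding cond_prob_def logits_def by simp
qed

theorem mainTheorem8:
  fixes M :: "'x measure"
    and f :: "'x \<Rightarrow> real^'m" and g :: "'y::finite \<Rightarrow> real^'m"
    and f' :: "'x \<Rightarrow> real^'n" and g' :: "'y \<Rightarrow> real^'n"
    and \<tau> :: real
  assumes "prob_space M"
    and "f \<in> borel_measurable M" and "f' \<in> borel_measurable M"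
    and "in_Theta f g" and "in_Theta f' g'"
    and "\<tau> > 0"
    and "tau_lower_bounded M \<tau> f g" and "tau_lower_bounded M \<tau> f' g'"
  shows "d_logit_sq M (logits f g) (logits f' g')
           \<le> 2 * \<bar>ln \<tau>\<bar> * L1_logit M (logits f g) (logits f' g')"
proof -
  interpret prob_space M by fact
  let ?u = "logits f g" and ?v = "logits f' g'"
  define c where "c = \<bar>ln \<tau>\<bar>"
  have AEb: "AE x in M. \<forall>y. \<bar>?u x y\<bar> \<le> c \<and> \<bar>?v x y\<bar> \<le> c"
    using assms(7,8) unfolding tau_lower_bounded_def
  proof eventually_elim
    case (elim x)
    show ?case
    proof
      fix y
      have "\<bar>?u x y\<bar> \<le> - ln \<tau>" by (rule logit_bound2[OF assms(4,6) elim(1)])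
      moreover have "\<bar>?v x y\<bar> \<le> - ln \<tau>" by (rule logit_bound2[OF assms(5,6) elim(2)])
      ultimately show "\<bar>?u x y\<bar> \<le> c \<and> \<bar>?v x y\<bar> \<le> c" unfolding c_def by linarith
    qed
  qed
  have mu: "(\<lambda>x. ?u x y) \<in> borel_measurable M" for y
    unfolding logits_def using assms(2) by measurable
  have mv: "(\<lambda>x. ?v x y) \<in> borel_measurable M" for y
    unfolding logits_def using assms(3) by measurable
  have meas: "(\<lambda>x. \<Sum>y\<in>UNIV. \<bar>?u x y - ?v x y\<bar>) \<in> borel_measurable M"
    using mu mv by measurable
  have int: "integrable M (\<lambda>x. \<Sum>y\<in>UNIV. \<bar>?u x y - ?v x y\<bar>)"
  proof (rule integrable_const_bound[where B="real CARD('y) * (2*c)"])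
    show "AE x in M. norm (\<Sum>y\<in>UNIV. \<bar>?u x y - ?v x y\<bar>) \<le> real CARD('y) * (2*c)"
      using AEb
    proof eventually_elim
      case (elim x)
      have "(\<Sum>y\<in>UNIV. \<bar>?u x y - ?v x y\<bar>) \<le> (\<Sum>y\<in>(UNIV::'y set). 2*c)"
        apply (rule sum_mono) using elim by (smt (verit))
      moreover have "(\<Sum>y\<in>UNIV. \<bar>?u x y - ?v x y\<bar>) \<ge> 0" by (simp add: sum_nonneg)
      ultimately show ?case by simp
    qed
  qed (rule meas)
  have "d_logit_sq M ?u ?v \<le> (\<integral>x. 2 * c * (\<Sum>y\<in>UNIV. \<bar>?u x y - ?v x y\<bar>) \<partial>M)"
    unfolding d_logit_sq_def
  proof (rule integral_mono_AE')
    show "integrable M (\<lambda>x. 2 * c * (\<Sum>y\<in>UNIV. \<bar>?u x y - ?v x y\<bar>))"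
      using int by simp
    show "AE x in M. (\<Sum>y\<in>UNIV. (?u x y - ?v x y)\<^sup>2) \<le> 2 * c * (\<Sum>y\<in>UNIV. \<bar>?u x y - ?v x y\<bar>)"
      using AEb
    proof eventually_elim
      case (elim x)
      have "(\<Sum>y\<in>UNIV. (?u x y - ?v x y)\<^sup>2) \<le> (\<Sum>y\<in>UNIV. 2 * c * \<bar>?u x y - ?v x y\<bar>)"
      proof (rule sum_mono)
        fix y
        have d: "\<bar>?u x y - ?v x y\<bar> \<le> 2 * c" using elim[rule_format, of y] by linarith
        have "(?u x y - ?v x y)\<^sup>2 = \<bar>?u x y - ?v x y\<bar> * \<bar>?u x y - ?v x y\<bar>"
          by (simp add: power2_eq_square)
        also have "\<dots> \<le> 2 * c * \<bar>?u x y - ?v x y\<bar>"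
          by (rule mult_right_mono[OF d]) simp
        finally show "(?u x y - ?v x y)\<^sup>2 \<le> 2 * c * \<bar>?u x y - ?v x y\<bar>" .
      qed
      then show ?case by (simp add: sum_distrib_left)
    qed
    show "AE x in M. 0 \<le> 2 * c * (\<Sum>y\<in>UNIV. \<bar>?u x y - ?v x y\<bar>)"
      by (simp add: c_def sum_nonneg)
  qed
  also have "\<dots> = 2 * c * L1_logit M ?u ?v"
    unfolding L1_logit_def by simp
  finally show ?thesis unfolding c_def .
qed

end
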